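(* For the semi-discretization described below, choose $$f^\rho=\{\{\rho\}\}_{\log}\{\{v\}\},\qquad f^{\rho v}=\{\{v\}\}f^\rho+\{\{p\}\},\qquad f^{\rho e}=\frac{1}{\gamma-1}\frac{f^\rho}{\{\{\rho/p\}\}_{\log}}+\{\{v\}\}\{\{p\}\},\qquad v^{\mathrm{num}}=\{\{v\}\},$$ and any consistent $\rho^{\mathrm{num}}$. Then the semi-discretization is entropy-conservative for the entropy pair $U=-\rho s$, $F=-\rho sv$ with $s=\log(p/\rho^\gamma)$. If in addition $\rho^{\mathrm{num}}=\{\{\rho\}\}_{\log}$, the semi-discretization also conserves the total energy $\rho e+\tfrac12\rho v^2+\rho\phi$ (entropy-conservative for the pair $(\rho e+\tfrac12\rho v^2+\rho\phi,\ (\rho e+\tfrac12\rho v^2+\rho\phi+p)v)$).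
   Context: Let $\gamma>1$. States $(\rho,\rho v,\rho e)$ with $\rho>0$, $p=(\gamma-1)\rho e>0$, $v=\rho v/\rho$, and a time-independent gravity potential $\phi_i$ attached to each cell (treated as an extra state component). The scheme is $\partial_t\rho_i+\frac{f^\rho_{i+1/2}-f^\rho_{i-1/2}}{\Delta x}=0$, $\partial_t(\rho v)_i+\frac{f^{\rho v}_{i+1/2}-f^{\rho v}_{i-1/2}}{\Delta x}+\frac{\rho^{\mathrm{num}}_{i+1/2}[\![\phi]\!]_{i+1/2}+\rho^{\mathrm{num}}_{i-1/2}[\![\phi]\!]_{i-1/2}}{2\Delta x}=0$, $\partial_t(\rho e)_i+\frac{f^{\rho e}_{i+1/2}-f^{\rho e}_{i-1/2}}{\Delta x}-\frac{v^{\mathrm{num}}_{i+1/2}[\![p]\!]_{i+1/2}+v^{\mathrm{num}}_{i-1/2}[\![p]\!]_{i-1/2}}{2\Delta x}=0$, with subscript $i+1/2$ meaning evaluation at $(u_i,u_{i+1})$. Notation: $\{\{a\}\}=\tfrac12(a_-+a_+)$, $[\![a]\!]=a_+-a_-$, and for positive $a$ the logarithmic mean $\{\{a\}\}_{\log}=[\![a]\!]/[\![\log a]\!]$ if $a_-\ne a_+$ and $=a_-$ otherwise. Entropy-conservative for $(U,F)$ means: there exists a two-point $F^{\mathrm{num}}$ with $F^{\mathrm{num}}(u,u)=F(u)$ such that for all grid states and all $i$, $U'(u_i)\cdot\partial_tu_i=-\frac{1}{\Delta x}(F^{\mathrm{num}}(u_i,u_{i+1})-F^{\mathrm{num}}(u_{i-1},u_i))$,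 where $U'$ is the gradient with respect to $(\rho,\rho v,\rho e)$ (with $\phi$ held fixed). *)

theory Defs
  imports "HOL-Analysis.Analysis"
begin

text \<open>A cell state is ((rho, rho v, rho e), phi): the three conserved variables
  together with the (time-independent) gravity potential phi.\<close>
type_synonym cstate = "(real \<times> real \<times> real) \<times> real"

definition rho :: "cstate \<Rightarrow> real" where
  "rho u = fst (fst u)"
definition mom :: "cstate \<Rightarrow> real" where
  "mom u = fst (snd (fst u))"
definition ien :: "cstate \<Rightarrow> real" where   \<comment> \<open>rho e\<close>
  "ien u = snd (snd (fst u))"
definition pot :: "cstate \<Rightarrow> real" where
  "pot u = snd u"
definition vel :: "cstate \<Rightarrow> real" where
  "vel u = mom u / rho u"
definition pres :: "real \<Rightarrow> cstate \<Rightarrow> real" where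
  "pres \<gamma> u = (\<gamma> - 1) * ien u"

definition admissible :: "real \<Rightarrow> cstate \<Rightarrow> bool" where
  "admissible \<gamma> u \<longleftrightarrow> rho u > 0 \<and> pres \<gamma> u > 0"

definition amean :: "real \<Rightarrow> real \<Rightarrow> real" where
  "amean a b = (a + b) / 2"
definition logmean :: "real \<Rightarrow> real \<Rightarrow> real" where
  "logmean a b = (if a = b then a else (b - a) / (ln b - ln a))"

text \<open>The semi-discretization: time derivative of (rho, rho v, rho e) in cell i,
  given two-point fluxes fr, fm, fe and two-point functions rnum, vnum.\<close>
definition semidisc ::
  "real \<Rightarrow> real \<Rightarrow> (cstate \<Rightarrow> cstate \<Rightarrow> real) \<Rightarrow> (cstate \<Rightarrow> cstate \<Rightarrow> real)
   \<Rightarrow> (cstate \<Rightarrow> cstate \<Rightarrow> real) \<Rightarrow> (cstate \<Rightarrow> cstate \<Rightarrow> real) \<Rightarrow> (cstate \<Rightarrow> cstate \<Rightarrow> real)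
   \<Rightarrow> (int \<Rightarrow> cstate) \<Rightarrow> int \<Rightarrow> real \<times> real \<times> real" where
  "semidisc \<gamma> dx fr fm fe rnum vnum u i =
    ( - (fr (u i) (u (i+1)) - fr (u (i-1)) (u i)) / dx,
      - (fm (u i) (u (i+1)) - fm (u (i-1)) (u i)) / dx
        - (rnum (u i) (u (i+1)) * (pot (u (i+1)) - pot (u i))
           + rnum (u (i-1)) (u i) * (pot (u i) - pot (u (i-1)))) / (2 * dx),
      - (fe (u i) (u (i+1)) - fe (u (i-1)) (u i)) / dx
        + (vnum (u i) (u (i+1)) * (pres \<gamma> (u (i+1)) - pres \<gamma> (u i))
           + vnum (u (i-1)) (u i) * (pres \<gamma> (u i) - pres \<gamma> (u (i-1)))) / (2 * dx))"

text \<open>Entropy conservation for the pair (U, F): there is a consistent two-point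
  numerical flux Fnum such that for every admissible grid state and every cell i,
  U'(u_i) \<bullet> d/dt u_i = -(Fnum(u_i,u_{i+1}) - Fnum(u_{i-1},u_i))/dx, where U'(u_i)
  is the gradient of U w.r.t. (rho, rho v, rho e) with phi held fixed.\<close>
definition entropy_conservative ::
  "real \<Rightarrow> real \<Rightarrow> ((int \<Rightarrow> cstate) \<Rightarrow> int \<Rightarrow> real \<times> real \<times> real)
   \<Rightarrow> (cstate \<Rightarrow> real) \<Rightarrow> (cstate \<Rightarrow> real) \<Rightarrow> bool" where
  "entropy_conservative \<gamma> dx rhs U F \<longleftrightarrow>
    (\<exists>Fnum :: cstate \<Rightarrow> cstate \<Rightarrow> real.
       (\<forall>u. admissible \<gamma> u \<longrightarrow> Fnum u u = F u) \<and>
       (\<forall>u :: int \<Rightarrow> cstate. (\<forall>j. admissible \<gamma> (u j)) \<longrightarrow>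
          (\<forall>i. \<exists>g. ((\<lambda>w. U (w, pot (u i))) has_derivative (\<lambda>h. g \<bullet> h)) (at (fst (u i)))
                  \<and> g \<bullet> rhs u i = - (Fnum (u i) (u (i+1)) - Fnum (u (i-1)) (u i)) / dx)))"

definition f_rho :: "cstate \<Rightarrow> cstate \<Rightarrow> real" where
  "f_rho a b = logmean (rho a) (rho b) * amean (vel a) (vel b)"
definition f_mom :: "real \<Rightarrow> cstate \<Rightarrow> cstate \<Rightarrow> real" where
  "f_mom \<gamma> a b = amean (vel a) (vel b) * f_rho a b + amean (pres \<gamma> a) (pres \<gamma> b)"
definition f_ien :: "real \<Rightarrow> cstate \<Rightarrow> cstate \<Rightarrow> real" where
  "f_ien \<gamma> a b = 1 / (\<gamma> - 1) * f_rho a b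
        / logmean (rho a / pres \<gamma> a) (rho b / pres \<gamma> b)
      + amean (vel a) (vel b) * amean (pres \<gamma> a) (pres \<gamma> b)"
definition v_num :: "cstate \<Rightarrow> cstate \<Rightarrow> real" where
  "v_num a b = amean (vel a) (vel b)"

definition spec_ent :: "real \<Rightarrow> cstate \<Rightarrow> real" where
  "spec_ent \<gamma> u = ln (pres \<gamma> u / rho u powr \<gamma>)"
definition U_ent :: "real \<Rightarrow> cstate \<Rightarrow> real" where
  "U_ent \<gamma> u = - rho u * spec_ent \<gamma> u"
definition F_ent :: "real \<Rightarrow> cstate \<Rightarrow> real" where
  "F_ent \<gamma> u = - rho u * spec_ent \<gamma> u * vel u"

definition U_tot :: "cstate \<Rightarrow> real" where
  "U_tot u = ien u + rho u * (vel u)\<^sup>2 / 2 + rho u * pot u"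
definition F_tot :: "real \<Rightarrow> cstate \<Rightarrow> real" where
  "F_tot \<gamma> u = (U_tot u + pres \<gamma> u) * vel u"

end

theory Submission
  imports Defs
begin

lemma logmean_ln: assumes "a > 0" "b > 0"
  shows "logmean a b * (ln b - ln a) = b - a"
  using assms by (auto simp: logmean_def)
lemma logmean_pos: assumes "a > 0" "b > 0" shows "logmean a b > 0"
proof (cases "a = b")
  case False
  then show ?thesis using assms
    by (cases "a < b") (auto simp: logmean_def zero_less_divide_iff)
qed (use assms in \<open>simp add: logmean_def\<close>)

lemma polyE_id:
  fixes g fr fe ba bb pa pb va vb L la lb qa qb :: real
  shows "((g - (qa - g*la))*fr - (g-1)*ba*fe + (g-1)*ba*((va+vb)/2)*(pb-pa)/2)
       - ((g - (qb - g*lb))*fr - (g-1)*bb*(fe + ((va+vb)/2)*(pb-pa)/2)) = 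
     - ((fr*((lb-qb) - (la-qa)) + (g-1)*(bb-ba)*((va+vb)/2)*((pa+pb)/2) - (g-1)*(bb-ba)*fe)
     + (g-1)*((va+vb)/2)*(L*(lb - la) - (bb*pb - ba*pa)) + (g-1)*(lb-la)*(fr - L*((va+vb)/2)))"
  by (simp add: field_simps)

lemma polyE:
  fixes g fr fe ba bb pa pb va vb L la lb qa qb :: real
  assumes H1: "L*(lb - la) = bb*pb - ba*pa"
    and H2: "(g-1)*(bb-ba)*fe = fr*((lb-qb) - (la-qa)) + (g-1)*(bb-ba)*((va+vb)/2)*((pa+pb)/2)"
    and H3: "fr = L*((va+vb)/2)"
  shows "(g - (qa - g*la))*fr - (g-1)*ba*fe + (g-1)*ba*((va+vb)/2)*(pb-pa)/2
       = (g - (qb - g*lb))*fr - (g-1)*bb*(fe + ((va+vb)/2)*(pb-pa)/2)"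
proof -
  have "((g - (qa - g*la))*fr - (g-1)*ba*fe + (g-1)*ba*((va+vb)/2)*(pb-pa)/2)
       - ((g - (qb - g*lb))*fr - (g-1)*bb*(fe + ((va+vb)/2)*(pb-pa)/2)) = 0"
  proof -
    have z1: "fr*((lb-qb) - (la-qa)) + (g-1)*(bb-ba)*((va+vb)/2)*((pa+pb)/2) - (g-1)*(bb-ba)*fe = 0"
      using H2 by linarith
    have z2: "L*(lb - la) - (bb*pb - ba*pa) = 0" using H1 by linarith
    have z3: "fr - L*((va+vb)/2) = 0" using H3 by linarith
    note e = polyE_id[of g qa la fr ba fe va vb pb pa qb lb bb L]
    show ?thesis unfolding e z1 z2 z3 by simp
  qed
  then show ?thesis by (simp only: right_minus_eq)
qed

definition FnE :: "real \<Rightarrow> cstate \<Rightarrow> cstate \<Rightarrow> real" where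
  "FnE g a b = (g - spec_ent g a) * f_rho a b - (g-1)*(rho a/pres g a) * f_ien g a b
     + (g-1)*(rho a/pres g a) * v_num a b * (pres g b - pres g a)/2"

lemma spec_ent_eq: assumes "admissible g a"
  shows "spec_ent g a = ln (pres g a) - g * ln (rho a)"
  using assms by (simp add: spec_ent_def admissible_def ln_div ln_powr)

lemma keyE:
  assumes g: "g > 1" and a: "admissible g a" and b: "admissible g b"
  shows "FnE g a b = (g - spec_ent g b)*f_rho a b
           - (g-1)*(rho b/pres g b)*(f_ien g a b + v_num a b*(pres g b - pres g a)/2)"
proof -
  define ra rb pa pb where "ra = rho a" "rb = rho b" "pa = pres g a" "pb = pres g b"
  have pos: "ra > 0" "rb > 0" "pa > 0" "pb > 0" using a b by (auto simp: admissible_def ra_rb_pa_pb_def)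
  define ba bb where "ba = ra/pa" "bb = rb/pb"
  have bpos: "ba > 0" "bb > 0" using pos by (auto simp: ba_bb_def)
  define M where "M = logmean ba bb"
  have Mpos: "M > 0" using bpos logmean_pos by (simp add: M_def)
  have Mln: "M * (ln bb - ln ba) = bb - ba" using bpos logmean_ln by (simp add: M_def)
  have lnb: "ln bb = ln rb - ln pb" "ln ba = ln ra - ln pa" using pos by (auto simp: ba_bb_def ln_div)
  have H1: "logmean ra rb * (ln rb - ln ra) = bb*pb - ba*pa"
    using pos logmean_ln by (simp add: ba_bb_def)
  have fe: "f_ien g a b = 1/(g-1) * f_rho a b / M + ((vel a + vel b)/2) * ((pa+pb)/2)"
    by (simp add: f_ien_def M_def ba_bb_def ra_rb_pa_pb_def amean_def)
  have H2: "(g-1)*(bb-ba)*f_ien g a b = f_rho a b*((ln rb - ln pb) - (ln ra - ln pa))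
      + (g-1)*(bb-ba)*((vel a + vel b)/2)*((pa+pb)/2)"
    unfolding fe lnb[symmetric] using g Mpos by (simp add: Mln[symmetric] field_simps)
  have H3: "f_rho a b = logmean ra rb * ((vel a + vel b)/2)"
    by (simp add: f_rho_def ra_rb_pa_pb_def amean_def)
  have "FnE g a b = (g - (ln pa - g*ln ra))*f_rho a b - (g-1)*ba*f_ien g a b
        + (g-1)*ba*((vel a + vel b)/2)*(pb-pa)/2"
    unfolding FnE_def spec_ent_eq[OF a] by (simp add: ra_rb_pa_pb_def ba_bb_def v_num_def amean_def)
  also have "\<dots> = (g - (ln pb - g*ln rb))*f_rho a b - (g-1)*bb*(f_ien g a b + ((vel a + vel b)/2)*(pb-pa)/2)"
    by (rule polyE[OF H1 H2 H3])
  finally show ?thesis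
    unfolding spec_ent_eq[OF b] by (simp add: ra_rb_pa_pb_def ba_bb_def v_num_def amean_def)
qed

lemma consE:
  assumes g: "g > 1" and a: "admissible g a"
  shows "FnE g a a = F_ent g a"
proof -
  have pos: "rho a > 0" "pres g a > 0" using a by (auto simp: admissible_def)
  have "ien a = pres g a / (g-1)" using g by (simp add: pres_def)
  then show ?thesis using pos g
    by (simp add: FnE_def F_ent_def f_rho_def f_ien_def v_num_def amean_def logmean_def vel_def field_simps)
qed

definition FnT :: "real \<Rightarrow> cstate \<Rightarrow> cstate \<Rightarrow> real" where
  "FnT g a b = - pres g a * vel a + (pot a - (vel a)^2/2) * f_rho a b
     + vel a * (f_mom g a b + logmean (rho a) (rho b) * (pot b - pot a)/2)
     + f_ien g a b - v_num a b * (pres g b - pres g a)/2"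

lemma polyT:
  fixes L fe va vc pa pc xa xc :: real
  shows "- pa * va + (xa - va^2/2) * (L*((va+vc)/2))
     + va * (((va+vc)/2)*(L*((va+vc)/2)) + (pa+pc)/2 + L * (xc - xa)/2)
     + fe - ((va+vc)/2) * (pc - pa)/2
   = - pc * vc + (xc - vc^2/2) * (L*((va+vc)/2))
     + vc * (((va+vc)/2)*(L*((va+vc)/2)) + (pa+pc)/2 - L * (xc - xa)/2)
     + fe + ((va+vc)/2) * (pc - pa)/2"
  by (simp add: field_simps power2_eq_square)

lemma keyT:
  "FnT g a c = - pres g c * vel c + (pot c - (vel c)^2/2)*f_rho a c
     + vel c*(f_mom g a c - logmean (rho a) (rho c)*(pot c - pot a)/2)
     + f_ien g a c + v_num a c*(pres g c - pres g a)/2"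
  unfolding FnT_def f_mom_def f_rho_def v_num_def amean_def
  by (rule polyT)

lemma consT:
  assumes g: "g > 1" and a: "admissible g a"
  shows "FnT g a a = F_tot g a"
proof -
  have pos: "rho a > 0" "pres g a > 0" using a by (auto simp: admissible_def)
  have "(g-1) * ien a > 0" using pos by (simp add: pres_def)
  then show ?thesis using pos g
    by (simp add: pres_def FnT_def F_tot_def U_tot_def f_mom_def f_rho_def f_ien_def v_num_def amean_def
        logmean_def vel_def field_simps power2_eq_square)
qed

lemma teleE:
  fixes dx w1 c frA frB feA feB vA vB dpA dpB X :: real
  assumes "dx \<noteq> 0"
  shows "(w1, 0::real, - c) \<bullet> (-(frB - frA)/dx, X, -(feB - feA)/dx + (vB * dpB + vA * dpA)/(2*dx))
    = -((w1*frB - c*feB + c * vB * dpB/2) - (w1*frA - c*(feA + vA * dpA/2)))/dx"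
  using assms by (simp add: field_simps)

lemma teleT:
  fixes dx w1 vc frA frB feA feB fmA fmB vA vB dpA dpB LA LB dfA dfB P :: real
  assumes "dx \<noteq> 0"
  shows "(w1, vc, 1::real) \<bullet> (-(frB - frA)/dx, -(fmB - fmA)/dx - (LB*dfB + LA*dfA)/(2*dx),
        -(feB - feA)/dx + (vB*dpB + vA*dpA)/(2*dx))
    = -((P + w1*frB + vc*(fmB + LB*dfB/2) + feB - vB*dpB/2)
       - (P + w1*frA + vc*(fmA - LA*dfA/2) + feA + vA*dpA/2))/dx"
  using assms by (simp add: field_simps)

lemma dU: assumes "r > 0" "(g - 1) * e > 0" "g > 1"
  shows "((\<lambda>w::real\<times>real\<times>real. - fst w * ln ((g-1) * snd (snd w) / fst w powr g)) has_derivative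
     (\<lambda>h. (g - ln ((g-1)*e / r powr g), 0::real, - ((g-1)*(r/((g-1)*e)))) \<bullet> h)) (at (r,m,e))"
proof -
  have e: "e > 0" using assms by (simp add: zero_less_mult_iff)
  have rp: "r powr g > 0" using assms by simp
  show ?thesis
  using assms e rp
  apply (auto intro!: derivative_eq_intros)
  apply (rule ext)
  apply (clarsimp simp: field_simps)
  done
qed

lemma dT: assumes "r > 0"
  shows "((\<lambda>w::real\<times>real\<times>real. snd (snd w) + fst w * (fst (snd w) / fst w)\<^sup>2 / 2 + fst w * p) has_derivative
     (\<lambda>h. (p - (m/r)^2/2, m/r, 1::real) \<bullet> h)) (at (r,m,e))"
  using assms
  apply (auto intro!: derivative_eq_intros)
  apply (rule ext)
  apply (clarsimp simp: field_simps power2_eq_square)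
  done

theorem mainTheorem12:
  fixes \<gamma> dx :: real and rnum :: "cstate \<Rightarrow> cstate \<Rightarrow> real"
  assumes "\<gamma> > 1" and "dx > 0"
    and "\<forall>u. admissible \<gamma> u \<longrightarrow> rnum u u = rho u"
  shows "entropy_conservative \<gamma> dx
           (semidisc \<gamma> dx f_rho (f_mom \<gamma>) (f_ien \<gamma>) rnum v_num) (U_ent \<gamma>) (F_ent \<gamma>)
       \<and> (rnum = (\<lambda>a b. logmean (rho a) (rho b)) \<longrightarrow>
           entropy_conservative \<gamma> dx
             (semidisc \<gamma> dx f_rho (f_mom \<gamma>) (f_ien \<gamma>) rnum v_num) U_tot (F_tot \<gamma>))"
proof (intro conjI impI)
  have g: "\<gamma> > 1" and dx: "dx \<noteq> 0" using assms by auto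
  show "entropy_conservative \<gamma> dx
           (semidisc \<gamma> dx f_rho (f_mom \<gamma>) (f_ien \<gamma>) rnum v_num) (U_ent \<gamma>) (F_ent \<gamma>)"
    unfolding entropy_conservative_def
  proof (intro exI[of _ "FnE \<gamma>"] conjI allI impI)
    fix u assume "admissible \<gamma> u" then show "FnE \<gamma> u u = F_ent \<gamma> u" using consE g by blast
  next
    fix u :: "int \<Rightarrow> cstate" and i :: int
    assume adm: "\<forall>j. admissible \<gamma> (u j)"
    obtain r m e phi where ui: "u i = ((r,m,e),phi)" by (metis prod.exhaust)
    have r: "r > 0" and pe: "(\<gamma>-1)*e > 0" using adm[rule_format, of i] ui
      by (auto simp: admissible_def rho_def pres_def ien_def)
    define w where "w = (\<gamma> - spec_ent \<gamma> (u i), 0::real, - ((\<gamma>-1)*(rho (u i)/pres \<gamma> (u i))))"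
    have D: "((\<lambda>w. U_ent \<gamma> (w, pot (u i))) has_derivative (\<lambda>h. w \<bullet> h)) (at (fst (u i)))"
      using dU[OF r pe g, of m] ui
      by (simp only: w_def U_ent_def spec_ent_def pres_def rho_def ien_def fst_conv snd_conv)
    have K: "FnE \<gamma> (u (i-1)) (u i) = (\<gamma> - spec_ent \<gamma> (u i))*f_rho (u (i-1)) (u i)
           - (\<gamma>-1)*(rho (u i)/pres \<gamma> (u i))*(f_ien \<gamma> (u (i-1)) (u i)
              + v_num (u (i-1)) (u i)*(pres \<gamma> (u i) - pres \<gamma> (u (i-1)))/2)"
      using keyE[OF g adm[rule_format] adm[rule_format]] by blast
    have E: "w \<bullet> semidisc \<gamma> dx f_rho (f_mom \<gamma>) (f_ien \<gamma>) rnum v_num u i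
        = - (FnE \<gamma> (u i) (u (i + 1)) - FnE \<gamma> (u (i - 1)) (u i)) / dx"
      unfolding K semidisc_def w_def
      unfolding FnE_def[of \<gamma> "u i" "u (i+1)"]
      by (rule teleE[OF dx])
    show "\<exists>g. ((\<lambda>w. U_ent \<gamma> (w, pot (u i))) has_derivative (\<lambda>h. g \<bullet> h)) (at (fst (u i))) \<and>
             g \<bullet> semidisc \<gamma> dx f_rho (f_mom \<gamma>) (f_ien \<gamma>) rnum v_num u i
               = - (FnE \<gamma> (u i) (u (i + 1)) - FnE \<gamma> (u (i - 1)) (u i)) / dx"
      using D E by blast
  qed
next
  assume rn: "rnum = (\<lambda>a b. logmean (rho a) (rho b))"
  have g: "\<gamma> > 1" and dx: "dx \<noteq> 0" using assms by auto
  show "entropy_conservative \<gamma> dx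
           (semidisc \<gamma> dx f_rho (f_mom \<gamma>) (f_ien \<gamma>) rnum v_num) U_tot (F_tot \<gamma>)"
    unfolding entropy_conservative_def
  proof (intro exI[of _ "FnT \<gamma>"] conjI allI impI)
    fix u assume "admissible \<gamma> u" then show "FnT \<gamma> u u = F_tot \<gamma> u" using consT g by blast
  next
    fix u :: "int \<Rightarrow> cstate" and i :: int
    assume adm: "\<forall>j. admissible \<gamma> (u j)"
    obtain r m e phi where ui: "u i = ((r,m,e),phi)" by (metis prod.exhaust)
    have r: "r > 0" using adm[rule_format, of i] ui
      by (auto simp: admissible_def rho_def)
    define w where "w = (pot (u i) - (vel (u i))^2/2, vel (u i), 1::real)"
    have D: "((\<lambda>w. U_tot (w, pot (u i))) has_derivative (\<lambda>h. w \<bullet> h)) (at (fst (u i)))"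
      using dT[OF r, of phi m e] ui
      by (simp add: w_def U_tot_def vel_def rho_def ien_def mom_def pot_def)
    have E: "w \<bullet> semidisc \<gamma> dx f_rho (f_mom \<gamma>) (f_ien \<gamma>) rnum v_num u i
        = - (FnT \<gamma> (u i) (u (i + 1)) - FnT \<gamma> (u (i - 1)) (u i)) / dx"
      unfolding keyT[of \<gamma> "u (i-1)" "u i"] semidisc_def w_def rn
      unfolding FnT_def[of \<gamma> "u i" "u (i+1)"]
      by (rule teleT[OF dx])
    show "\<exists>g. ((\<lambda>w. U_tot (w, pot (u i))) has_derivative (\<lambda>h. g \<bullet> h)) (at (fst (u i))) \<and>
             g \<bullet> semidisc \<gamma> dx f_rho (f_mom \<gamma>) (f_ien \<gamma>) rnum v_num u i
               = - (FnT \<gamma> (u i) (u (i + 1)) - FnT \<gamma> (u (i - 1)) (u i)) / dx"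
      using D E by blast
  qed
qed

end
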